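(* Let $\pi$ be any policy. Then for every state $s\in\mathcal S$, $$g^\pi(s)\;\le\;V^{\pi}(s)-V^{\pi^*}(s)\;\le\;(1-\gamma)^{-1}\max_{s'\in\mathcal S} g^{\pi}(s').$$
   Context: An infinite-horizon discounted MDP is given by a finite state space $\mathcal S$, a finite action space $\mathcal A$, transition probabilities $\mathcal P(s'\mid s,a)$, a cost $c:\mathcal S\times\mathcal A\to\mathbb R$ and a discount factor $\gamma\in[0,1)$. $\Delta_{|\mathcal A|}$ denotes the probability simplex over $\mathcal A$. A (feasible) policy $\pi$ assigns to each $s$ a distribution $\pi(\cdot\mid s)\in\Delta_{|\mathcal A|}$. For each state $s$, $p\mapsto h^{p}(s)$ is a closed convex function on $\Delta_{|\mathcal A|}$ (the regularizer). The value functions are $V^\pi(s)=\mathbb E\big[\sum_{t\ge0}\gamma^t\,(c(s_t,a_t)+h^{\pi(\cdot\mid s_t)}(s_t))\mid s_0=s,\ a_t\sim\pi(\cdot\mid s_t),\ s_{t+1}\sim\mathcal P(\cdot\mid s_t,a_t)\big]$ and $Q^\pi(s,a)$ is defined by the same expression with the additional condition $a_0=a$. $\pi^*$ denotes an optimal policy, i.e. $V^{\pi^*}(s)\le V^\pi(s)$ for all policies $\pi$ and all $s$ (assumed to exist). For $p\in\Delta_{|\mathcal A|}$ the advantage function is $\psi^\pi(s,p):=\langle Q^\pi(s,\cdot),p\rangle-V^\pi(s)+h^{p}(s)-h^{\pi(\cdot\mid s)}(s)$, and the advantage gap function is $g^\pi(s):=\max_{p\in\Delta_{|\mathcal A|}}\{-\psi^\pi(s,p)\}$.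 *)

theory Defs
  imports "HOL-Analysis.Analysis"
begin

definition act_simplex :: "('a::finite \<Rightarrow> real) set" where
  "act_simplex = {p. (\<forall>a. 0 \<le> p a) \<and> sum p UNIV = 1}"

definition policy :: "('s \<Rightarrow> 'a::finite \<Rightarrow> real) \<Rightarrow> bool" where
  "policy \<pi> \<longleftrightarrow> (\<forall>s. \<pi> s \<in> act_simplex)"

definition stochastic :: "('s::finite \<Rightarrow> 'a \<Rightarrow> 's \<Rightarrow> real) \<Rightarrow> bool" where
  "stochastic P \<longleftrightarrow> (\<forall>s a. (\<forall>s'. 0 \<le> P s a s') \<and> (\<Sum>s'\<in>UNIV. P s a s') = 1)"

text \<open>Closed convex function on the act_simplex (extended by +infinity outside):
  convex on the act_simplex with closed epigraph.\<close>
definition closed_convex_on_simplex :: "(('a::finite \<Rightarrow> real) \<Rightarrow> real) \<Rightarrow> bool" where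
  "closed_convex_on_simplex f \<longleftrightarrow>
     (\<forall>p\<in>act_simplex. \<forall>q\<in>act_simplex. \<forall>u::real. 0 \<le> u \<longrightarrow> u \<le> 1 \<longrightarrow>
        f (\<lambda>a. u * p a + (1 - u) * q a) \<le> u * f p + (1 - u) * f q) \<and> closed {(p, t). p \<in> act_simplex \<and> f p \<le> t}"

definition Ppol :: "('s::finite \<Rightarrow> 'a::finite \<Rightarrow> 's \<Rightarrow> real) \<Rightarrow> ('s \<Rightarrow> 'a \<Rightarrow> real) \<Rightarrow> 's \<Rightarrow> 's \<Rightarrow> real" where
  "Ppol P \<pi> s s' = (\<Sum>a\<in>UNIV. \<pi> s a * P s a s')"

fun dist_t :: "('s::finite \<Rightarrow> 'a::finite \<Rightarrow> 's \<Rightarrow> real) \<Rightarrow> ('s \<Rightarrow> 'a \<Rightarrow> real) \<Rightarrow> nat \<Rightarrow> 's \<Rightarrow> 's \<Rightarrow> real" where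
  "dist_t P \<pi> 0 s s' = (if s' = s then 1 else 0)"
| "dist_t P \<pi> (Suc t) s s'' = (\<Sum>s'\<in>UNIV. dist_t P \<pi> t s s' * Ppol P \<pi> s' s'')"

definition cpol :: "('s \<Rightarrow> 'a::finite \<Rightarrow> real) \<Rightarrow> ('s \<Rightarrow> ('a \<Rightarrow> real) \<Rightarrow> real) \<Rightarrow> ('s \<Rightarrow> 'a \<Rightarrow> real) \<Rightarrow> 's \<Rightarrow> real" where
  "cpol c h \<pi> s = (\<Sum>a\<in>UNIV. \<pi> s a * c s a) + h s (\<pi> s)"

definition Vf :: "('s::finite \<Rightarrow> 'a::finite \<Rightarrow> 's \<Rightarrow> real) \<Rightarrow> ('s \<Rightarrow> 'a \<Rightarrow> real) \<Rightarrow> ('s \<Rightarrow> ('a \<Rightarrow> real) \<Rightarrow> real) \<Rightarrow> real \<Rightarrow> ('s \<Rightarrow> 'a \<Rightarrow> real) \<Rightarrow> 's \<Rightarrow> real" where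
  "Vf P c h \<gamma> \<pi> s = (\<Sum>t. \<gamma> ^ t * (\<Sum>s'\<in>UNIV. dist_t P \<pi> t s s' * cpol c h \<pi> s'))"

text \<open>Q^pi(s,a): same expectation with a_0 = a. The t = 0 term is c(s,a) + h^{pi(.|s)}(s);
  for t >= 1 the state s_t has distribution sum_{s1} P(s1|s,a) dist_{t-1}(s1, .).\<close>
definition Qf :: "('s::finite \<Rightarrow> 'a::finite \<Rightarrow> 's \<Rightarrow> real) \<Rightarrow> ('s \<Rightarrow> 'a \<Rightarrow> real) \<Rightarrow> ('s \<Rightarrow> ('a \<Rightarrow> real) \<Rightarrow> real) \<Rightarrow> real \<Rightarrow> ('s \<Rightarrow> 'a \<Rightarrow> real) \<Rightarrow> 's \<Rightarrow> 'a \<Rightarrow> real" where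
  "Qf P c h \<gamma> \<pi> s a = c s a + h s (\<pi> s) +
     (\<Sum>t. \<gamma> ^ Suc t * (\<Sum>s1\<in>UNIV. P s a s1 * (\<Sum>s'\<in>UNIV. dist_t P \<pi> t s1 s' * cpol c h \<pi> s')))"

definition adv_psi :: "('s::finite \<Rightarrow> 'a::finite \<Rightarrow> 's \<Rightarrow> real) \<Rightarrow> ('s \<Rightarrow> 'a \<Rightarrow> real) \<Rightarrow> ('s \<Rightarrow> ('a \<Rightarrow> real) \<Rightarrow> real) \<Rightarrow> real \<Rightarrow> ('s \<Rightarrow> 'a \<Rightarrow> real) \<Rightarrow> 's \<Rightarrow> ('a \<Rightarrow> real) \<Rightarrow> real" where
  "adv_psi P c h \<gamma> \<pi> s p = (\<Sum>a\<in>UNIV. Qf P c h \<gamma> \<pi> s a * p a) - Vf P c h \<gamma> \<pi> s + h s p - h s (\<pi> s)"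

text \<open>Advantage adv_gap function g^pi(s) = max_{p in act_simplex} -adv_psi^pi(s,p)
  (the maximum is attained since h(s) is closed; written as Sup).\<close>
definition adv_gap :: "('s::finite \<Rightarrow> 'a::finite \<Rightarrow> 's \<Rightarrow> real) \<Rightarrow> ('s \<Rightarrow> 'a \<Rightarrow> real) \<Rightarrow> ('s \<Rightarrow> ('a \<Rightarrow> real) \<Rightarrow> real) \<Rightarrow> real \<Rightarrow> ('s \<Rightarrow> 'a \<Rightarrow> real) \<Rightarrow> 's \<Rightarrow> real" where
  "adv_gap P c h \<gamma> \<pi> s = (SUP p\<in>act_simplex. - adv_psi P c h \<gamma> \<pi> s p)"

end

theory Submission
  imports Defs
begin

definition Dv :: "('s::finite \<Rightarrow> 'a::finite \<Rightarrow> 's \<Rightarrow> real) \<Rightarrow> ('s \<Rightarrow> 'a \<Rightarrow> real) \<Rightarrow> nat \<Rightarrow> 's \<Rightarrow> ('s \<Rightarrow> real) \<Rightarrow> real" where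
  "Dv P \<pi> t s f = (\<Sum>s'\<in>UNIV. dist_t P \<pi> t s s' * f s')"

lemma Ppol_nonneg_sum:
  assumes "stochastic P" "policy \<pi>"
  shows "0 \<le> Ppol P \<pi> s s'" "(\<Sum>s'\<in>UNIV. Ppol P \<pi> s s') = 1"
proof -
  show "0 \<le> Ppol P \<pi> s s'"
    using assms unfolding Ppol_def stochastic_def policy_def act_simplex_def
    by (auto intro!: sum_nonneg mult_nonneg_nonneg)
  have "(\<Sum>s'\<in>UNIV. Ppol P \<pi> s s') = (\<Sum>a\<in>UNIV. \<pi> s a * (\<Sum>s'\<in>UNIV. P s a s'))"
    unfolding Ppol_def sum_distrib_left by (subst sum.swap) simp
  also have "\<dots> = 1" using assms unfolding stochastic_def policy_def act_simplex_def by simp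
  finally show "(\<Sum>s'\<in>UNIV. Ppol P \<pi> s s') = 1" .
qed

lemma dist_nonneg_sum:
  assumes "stochastic P" "policy \<pi>"
  shows "(\<forall>s'. 0 \<le> dist_t P \<pi> t s s') \<and> (\<Sum>s'\<in>UNIV. dist_t P \<pi> t s s') = 1"
proof (induction t)
  case 0
  then show ?case by simp
next
  case (Suc t)
  have nn: "\<forall>s'. 0 \<le> dist_t P \<pi> (Suc t) s s'"
    using Suc Ppol_nonneg_sum[OF assms] by (auto intro!: sum_nonneg mult_nonneg_nonneg)
  have "(\<Sum>s''\<in>UNIV. dist_t P \<pi> (Suc t) s s'')
      = (\<Sum>s'\<in>UNIV. dist_t P \<pi> t s s' * (\<Sum>s''\<in>UNIV. Ppol P \<pi> s' s''))"
    unfolding dist_t.simps sum_distrib_left sum_distrib_right by (subst sum.swap) simp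
  also have "\<dots> = 1" using Suc Ppol_nonneg_sum[OF assms] by simp
  finally show ?case using nn by simp
qed

lemma dist_le1:
  assumes "stochastic P" "policy \<pi>"
  shows "dist_t P \<pi> t s s' \<le> 1"
proof -
  have "dist_t P \<pi> t s s' \<le> (\<Sum>s'\<in>UNIV. dist_t P \<pi> t s s')"
    using dist_nonneg_sum[OF assms] by (intro member_le_sum) auto
  then show ?thesis using dist_nonneg_sum[OF assms] by simp
qed

lemma delta_sum1: fixes g :: "'s::finite \<Rightarrow> real" shows "(\<Sum>s'\<in>UNIV. (if s' = s then 1 else (0::real)) * g s') = g s"
proof -
  have "(\<Sum>s'\<in>UNIV. (if s' = s then 1 else (0::real)) * g s') = (\<Sum>s'\<in>UNIV. if s' = s then g s' else 0)"
    by (rule sum.cong) auto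
  also have "\<dots> = g s" by (subst sum.delta) auto
  finally show ?thesis .
qed

lemma delta_sum2: fixes g :: "'s::finite \<Rightarrow> real" shows "(\<Sum>s'\<in>UNIV. g s' * (if s = s' then 1 else (0::real))) = g s"
proof -
  have "(\<Sum>s'\<in>UNIV. g s' * (if s = s' then 1 else (0::real))) = (\<Sum>s'\<in>UNIV. if s' = s then g s' else 0)"
    by (rule sum.cong) auto
  also have "\<dots> = g s" by (subst sum.delta) auto
  finally show ?thesis .
qed

lemma dist_first:
  "dist_t P \<pi> (Suc t) s s'' = (\<Sum>s1\<in>UNIV. Ppol P \<pi> s s1 * dist_t P \<pi> t s1 s'')"
proof (induction t arbitrary: s'')
  case 0
  then show ?case by (simp only: dist_t.simps delta_sum1 delta_sum2)
next
  case (Suc t)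
  have "dist_t P \<pi> (Suc (Suc t)) s s'' = (\<Sum>s'\<in>UNIV. (\<Sum>s1\<in>UNIV. Ppol P \<pi> s s1 * dist_t P \<pi> t s1 s') * Ppol P \<pi> s' s'')"
    using Suc by simp
  also have "\<dots> = (\<Sum>s1\<in>UNIV. Ppol P \<pi> s s1 * (\<Sum>s'\<in>UNIV. dist_t P \<pi> t s1 s' * Ppol P \<pi> s' s''))"
    unfolding sum_distrib_right sum_distrib_left
    by (subst sum.swap) (simp add: mult.assoc)
  also have "\<dots> = (\<Sum>s1\<in>UNIV. Ppol P \<pi> s s1 * dist_t P \<pi> (Suc t) s1 s'')" by simp
  finally show ?case .
qed

lemma Dv_first: "Dv P \<pi> (Suc t) s f = (\<Sum>s1\<in>UNIV. Ppol P \<pi> s s1 * Dv P \<pi> t s1 f)"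
  unfolding Dv_def
  unfolding dist_first sum_distrib_left sum_distrib_right by (subst sum.swap) (simp add: mult.assoc)

lemma Dv_last: "Dv P \<pi> (Suc t) s f = Dv P \<pi> t s (\<lambda>s'. \<Sum>s1\<in>UNIV. Ppol P \<pi> s' s1 * f s1)"
  unfolding Dv_def dist_t.simps sum_distrib_left sum_distrib_right by (subst sum.swap) (simp add: mult.assoc)

lemma Dv_mono:
  assumes "stochastic P" "policy \<pi>" "\<And>x. f x \<le> g x"
  shows "Dv P \<pi> t s f \<le> Dv P \<pi> t s g"
  unfolding Dv_def using dist_nonneg_sum[OF assms(1,2)] assms(3)
  by (auto intro!: sum_mono mult_left_mono)

lemma Dv_const:
  assumes "stochastic P" "policy \<pi>"
  shows "Dv P \<pi> t s (\<lambda>_. k) = k"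
  unfolding Dv_def using dist_nonneg_sum[OF assms]
  by (simp add: sum_distrib_right[symmetric])

lemma Dv_bound:
  assumes "stochastic P" "policy \<pi>"
  shows "norm (Dv P \<pi> t s f) \<le> (\<Sum>s'\<in>UNIV. \<bar>f s'\<bar>)"
proof -
  have "norm (Dv P \<pi> t s f) \<le> (\<Sum>s'\<in>UNIV. \<bar>dist_t P \<pi> t s s' * f s'\<bar>)"
    unfolding Dv_def real_norm_def by (rule sum_abs)
  also have "\<dots> \<le> (\<Sum>s'\<in>UNIV. \<bar>f s'\<bar>)"
  proof (rule sum_mono)
    fix x
    have "\<bar>dist_t P \<pi> t s x * f x\<bar> = dist_t P \<pi> t s x * \<bar>f x\<bar>"
      using dist_nonneg_sum[OF assms] by (simp add: abs_mult)
    also have "\<dots> \<le> 1 * \<bar>f x\<bar>"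
      using dist_le1[OF assms] by (intro mult_right_mono) auto
    finally show "\<bar>dist_t P \<pi> t s x * f x\<bar> \<le> \<bar>f x\<bar>" by simp
  qed
  finally show ?thesis .
qed

lemma Dv_summable:
  assumes "stochastic P" "policy \<pi>" "0 \<le> \<gamma>" "\<gamma> < 1"
  shows "summable (\<lambda>t. \<gamma> ^ t * Dv P \<pi> t s f)"
proof (rule summable_comparison_test)
  show "\<exists>N. \<forall>n\<ge>N. norm (\<gamma> ^ n * Dv P \<pi> n s f) \<le> \<gamma> ^ n * (\<Sum>s'\<in>UNIV. \<bar>f s'\<bar>)"
    using Dv_bound[OF assms(1,2)] assms(3)
    by (auto simp: abs_mult intro!: mult_left_mono)
  show "summable (\<lambda>n. \<gamma> ^ n * (\<Sum>s'\<in>UNIV. \<bar>f s'\<bar>))"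
    using assms(3,4) by (intro summable_mult2 summable_geometric) simp
qed


lemma series_comb:
  fixes g :: "'s::finite \<Rightarrow> nat \<Rightarrow> real"
  assumes "\<And>s1. summable (g s1)"
  shows "(\<Sum>t. \<Sum>s1\<in>UNIV. w s1 * g s1 t) = (\<Sum>s1\<in>UNIV. w s1 * suminf (g s1))"
proof -
  have "(\<Sum>t. \<Sum>s1\<in>UNIV. w s1 * g s1 t) = (\<Sum>s1\<in>UNIV. \<Sum>t. w s1 * g s1 t)"
    using assms by (intro suminf_sum summable_mult)
  also have "\<dots> = (\<Sum>s1\<in>UNIV. w s1 * suminf (g s1))"
    using assms by (simp add: suminf_mult)
  finally show ?thesis .
qed

lemma Dv_zero: "Dv P \<pi> 0 s f = f s"
  unfolding Dv_def by (simp add: delta_sum1)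

lemma U_bellman:
  assumes "stochastic P" "policy \<pi>" "0 \<le> \<gamma>" "\<gamma> < 1"
  shows "(\<Sum>t. \<gamma>^t * Dv P \<pi> t s f) = f s + \<gamma> * (\<Sum>s1\<in>UNIV. Ppol P \<pi> s s1 * (\<Sum>t. \<gamma>^t * Dv P \<pi> t s1 f))"
proof -
  define F where "F = (\<lambda>t. \<gamma>^t * Dv P \<pi> t s f)"
  have sF: "summable F" unfolding F_def by (rule Dv_summable[OF assms])
  have h1: "(\<Sum>n. F (Suc n)) = suminf F - F 0" by (rule suminf_split_head[OF sF])
  have h2: "F 0 = f s" unfolding F_def by (simp add: Dv_zero)
  have h3: "F (Suc n) = (\<Sum>s1\<in>UNIV. (\<gamma> * Ppol P \<pi> s s1) * (\<gamma>^n * Dv P \<pi> n s1 f))" for n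
    unfolding F_def Dv_first sum_distrib_left by (rule sum.cong) (simp_all add: mult_ac)
  have h4: "(\<Sum>n. \<Sum>s1\<in>UNIV. (\<gamma> * Ppol P \<pi> s s1) * (\<gamma>^n * Dv P \<pi> n s1 f))
      = (\<Sum>s1\<in>UNIV. (\<gamma> * Ppol P \<pi> s s1) * (\<Sum>n. \<gamma>^n * Dv P \<pi> n s1 f))"
    by (rule series_comb) (rule Dv_summable[OF assms])
  have h5: "(\<Sum>s1\<in>UNIV. (\<gamma> * Ppol P \<pi> s s1) * (\<Sum>n. \<gamma>^n * Dv P \<pi> n s1 f))
     = \<gamma> * (\<Sum>s1\<in>UNIV. Ppol P \<pi> s s1 * (\<Sum>t. \<gamma>^t * Dv P \<pi> t s1 f))"
    by (simp only: sum_distrib_left mult.assoc)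
  have "suminf F = F 0 + (\<Sum>n. F (Suc n))" using h1 by simp
  also have "\<dots> = f s + \<gamma> * (\<Sum>s1\<in>UNIV. Ppol P \<pi> s s1 * (\<Sum>t. \<gamma>^t * Dv P \<pi> t s1 f))"
    unfolding h2 h3 h4 h5 ..
  finally show ?thesis unfolding F_def .
qed

lemma Vf_Dv: "Vf P c h \<gamma> \<pi> s = (\<Sum>t. \<gamma>^t * Dv P \<pi> t s (cpol c h \<pi>))"
  by (simp add: Vf_def Dv_def)

lemma Vf_bellman:
  assumes "stochastic P" "policy \<pi>" "0 \<le> \<gamma>" "\<gamma> < 1"
  shows "Vf P c h \<gamma> \<pi> s = cpol c h \<pi> s + \<gamma> * (\<Sum>s1\<in>UNIV. Ppol P \<pi> s s1 * Vf P c h \<gamma> \<pi> s1)"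
  unfolding Vf_Dv by (rule U_bellman[OF assms])

lemma Qf_eq:
  assumes "stochastic P" "policy \<pi>" "0 \<le> \<gamma>" "\<gamma> < 1"
  shows "Qf P c h \<gamma> \<pi> s a = c s a + h s (\<pi> s) + \<gamma> * (\<Sum>s1\<in>UNIV. P s a s1 * Vf P c h \<gamma> \<pi> s1)"
proof -
  have "(\<Sum>t. \<gamma> ^ Suc t * (\<Sum>s1\<in>UNIV. P s a s1 * (\<Sum>s'\<in>UNIV. dist_t P \<pi> t s1 s' * cpol c h \<pi> s')))
     = (\<Sum>t. \<Sum>s1\<in>UNIV. (\<gamma> * P s a s1) * (\<gamma>^t * Dv P \<pi> t s1 (cpol c h \<pi>)))"
    unfolding Dv_def sum_distrib_left[of "\<gamma> ^ Suc _"] by (intro suminf_cong sum.cong) (simp_all add: mult_ac)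
  also have "\<dots> = (\<Sum>s1\<in>UNIV. (\<gamma> * P s a s1) * (\<Sum>t. \<gamma>^t * Dv P \<pi> t s1 (cpol c h \<pi>)))"
    by (rule series_comb) (rule Dv_summable[OF assms])
  also have "\<dots> = \<gamma> * (\<Sum>s1\<in>UNIV. P s a s1 * Vf P c h \<gamma> \<pi> s1)"
    unfolding Vf_Dv by (simp only: sum_distrib_left mult.assoc)
  finally show ?thesis unfolding Qf_def by simp
qed

lemma psi_eq:
  assumes "stochastic P" "policy \<pi>" "0 \<le> \<gamma>" "\<gamma> < 1" "p \<in> act_simplex"
  shows "adv_psi P c h \<gamma> \<pi> s p = (\<Sum>a\<in>UNIV. p a * c s a) + h s p
     + \<gamma> * (\<Sum>s1\<in>UNIV. (\<Sum>a\<in>UNIV. p a * P s a s1) * Vf P c h \<gamma> \<pi> s1) - Vf P c h \<gamma> \<pi> s"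
proof -
  define V where "V = Vf P c h \<gamma> \<pi>"
  have sp: "(\<Sum>a\<in>UNIV. p a) = 1" using assms(5) by (simp add: act_simplex_def)
  have e1: "Qf P c h \<gamma> \<pi> s a * p a = p a * c s a + h s (\<pi> s) * p a + \<gamma> * (\<Sum>s1\<in>UNIV. p a * P s a s1 * V s1)" for a
  proof -
    have "p a * (\<Sum>s1\<in>UNIV. P s a s1 * V s1) = (\<Sum>s1\<in>UNIV. p a * P s a s1 * V s1)"
      by (simp add: sum_distrib_left mult.assoc)
    moreover have "Qf P c h \<gamma> \<pi> s a * p a = p a * c s a + h s (\<pi> s) * p a + \<gamma> * (p a * (\<Sum>s1\<in>UNIV. P s a s1 * V s1))"
      unfolding Qf_eq[OF assms(1-4)] V_def by (simp add: algebra_simps)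
    ultimately show ?thesis by simp
  qed
  have e2: "(\<Sum>a\<in>UNIV. Qf P c h \<gamma> \<pi> s a * p a)
     = (\<Sum>a\<in>UNIV. p a * c s a) + h s (\<pi> s) * (\<Sum>a\<in>UNIV. p a)
      + \<gamma> * (\<Sum>a\<in>UNIV. \<Sum>s1\<in>UNIV. p a * P s a s1 * V s1)"
    unfolding e1 sum.distrib by (simp only: sum_distrib_left)
  have e3: "(\<Sum>a\<in>UNIV. \<Sum>s1\<in>UNIV. p a * P s a s1 * V s1)
      = (\<Sum>s1\<in>UNIV. (\<Sum>a\<in>UNIV. p a * P s a s1) * V s1)"
    unfolding sum_distrib_right by (rule sum.swap)
  show ?thesis unfolding adv_psi_def e2 unfolding e3 sp unfolding V_def by simp
qed

lemma psi_pol: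
  assumes "stochastic P" "policy \<pi>" "0 \<le> \<gamma>" "\<gamma> < 1" "policy \<pi>'"
  shows "adv_psi P c h \<gamma> \<pi> s (\<pi>' s) = cpol c h \<pi>' s
     + \<gamma> * (\<Sum>s1\<in>UNIV. Ppol P \<pi>' s s1 * Vf P c h \<gamma> \<pi> s1) - Vf P c h \<gamma> \<pi> s"
  using psi_eq[OF assms(1-4), of "\<pi>' s"] assms(5)
  by (simp add: policy_def cpol_def Ppol_def)

lemma psi_self:
  assumes "stochastic P" "policy \<pi>" "0 \<le> \<gamma>" "\<gamma> < 1"
  shows "adv_psi P c h \<gamma> \<pi> s (\<pi> s) = 0"
  using psi_pol[OF assms assms(2), where c=c and h=h and s=s] Vf_bellman[OF assms, where c=c and h=h and s=s] by linarith


lemma Dv_lin: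
  "Dv P \<pi> t s (\<lambda>x. f x + g2 x - g x) = Dv P \<pi> t s f + Dv P \<pi> t s g2 - Dv P \<pi> t s g"
  unfolding Dv_def by (simp add: algebra_simps sum.distrib sum_subtractf)

lemma Dv_scale:
  "Dv P \<pi> t s (\<lambda>x. k * f x) = k * Dv P \<pi> t s f"
  unfolding Dv_def by (simp add: sum_distrib_left mult_ac)

lemma perf_diff:
  assumes "stochastic P" "policy \<pi>" "0 \<le> \<gamma>" "\<gamma> < 1" "policy \<pi>'"
  shows "Vf P c h \<gamma> \<pi>' s - Vf P c h \<gamma> \<pi> s
       = (\<Sum>t. \<gamma>^t * Dv P \<pi>' t s (\<lambda>s'. adv_psi P c h \<gamma> \<pi> s' (\<pi>' s')))"
proof -
  define W where "W = Vf P c h \<gamma> \<pi>"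
  define A where "A = (\<lambda>t. \<gamma>^t * Dv P \<pi>' t s (cpol c h \<pi>'))"
  define E where "E = (\<lambda>t. \<gamma>^t * Dv P \<pi>' t s W)"
  have sA: "summable A" unfolding A_def by (rule Dv_summable[OF assms(1,5,3,4)])
  have sE: "summable E" unfolding E_def by (rule Dv_summable[OF assms(1,5,3,4)])
  have sE': "summable (\<lambda>t. E (Suc t))" using sE by (simp add: summable_Suc_iff)
  have key: "\<gamma>^t * Dv P \<pi>' t s (\<lambda>s'. adv_psi P c h \<gamma> \<pi> s' (\<pi>' s')) = A t + (E (Suc t) - E t)" for t
  proof -
    have "(\<lambda>s'. adv_psi P c h \<gamma> \<pi> s' (\<pi>' s'))
        = (\<lambda>s'. cpol c h \<pi>' s' + \<gamma> * (\<Sum>s1\<in>UNIV. Ppol P \<pi>' s' s1 * W s1) - W s')"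
      using psi_pol[OF assms] unfolding W_def by simp
    then have "Dv P \<pi>' t s (\<lambda>s'. adv_psi P c h \<gamma> \<pi> s' (\<pi>' s'))
       = Dv P \<pi>' t s (cpol c h \<pi>') + \<gamma> * Dv P \<pi>' (Suc t) s W - Dv P \<pi>' t s W"
      by (simp only: Dv_lin Dv_scale Dv_last)
    then have "\<gamma>^t * Dv P \<pi>' t s (\<lambda>s'. adv_psi P c h \<gamma> \<pi> s' (\<pi>' s'))
       = \<gamma>^t * (Dv P \<pi>' t s (cpol c h \<pi>') + \<gamma> * Dv P \<pi>' (Suc t) s W - Dv P \<pi>' t s W)" by simp
    then show ?thesis unfolding A_def E_def by (simp add: algebra_simps)
  qed
  have "(\<Sum>t. \<gamma>^t * Dv P \<pi>' t s (\<lambda>s'. adv_psi P c h \<gamma> \<pi> s' (\<pi>' s')))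
      = (\<Sum>t. A t + (E (Suc t) - E t))" unfolding key ..
  also have "\<dots> = suminf A + ((\<Sum>t. E (Suc t)) - suminf E)"
    using sA sE sE' by (simp add: suminf_add summable_diff suminf_diff)
  also have "\<dots> = suminf A - E 0" using suminf_split_head[OF sE] by simp
  also have "suminf A = Vf P c h \<gamma> \<pi>' s" unfolding A_def Vf_Dv ..
  also have "E 0 = W s" unfolding E_def by (simp add: Dv_zero)
  finally show ?thesis unfolding W_def by simp
qed


lemma neg_psi_le:
  assumes "stochastic P" "policy \<pi>" "0 \<le> \<gamma>" "\<gamma> < 1"
    and opt: "\<And>\<pi>' s. policy \<pi>' \<Longrightarrow> Vf P c h \<gamma> \<pi>o s \<le> Vf P c h \<gamma> \<pi>' s"
    and p: "p \<in> act_simplex"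
  shows "- adv_psi P c h \<gamma> \<pi> s p \<le> Vf P c h \<gamma> \<pi> s - Vf P c h \<gamma> \<pi>o s"
proof (cases "adv_psi P c h \<gamma> \<pi> s p \<le> 0")
  case False
  then show ?thesis using opt[OF assms(2), of s] by linarith
next
  case True
  define \<psi> where "\<psi> = adv_psi P c h \<gamma> \<pi> s p"
  define \<pi>' where "\<pi>' = \<pi>(s := p)"
  have pol': "policy \<pi>'" using assms(2) p unfolding \<pi>'_def policy_def by auto
  have phi: "(\<lambda>s'. adv_psi P c h \<gamma> \<pi> s' (\<pi>' s')) = (\<lambda>s'. if s' = s then \<psi> else 0)"
    by (rule ext) (simp add: \<pi>'_def \<psi>_def psi_self[OF assms(1-4)])
  have D: "Dv P \<pi>' t s (\<lambda>s'. if s' = s then \<psi> else 0) = dist_t P \<pi>' t s s * \<psi>" for t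
  proof -
    have "Dv P \<pi>' t s (\<lambda>s'. if s' = s then \<psi> else 0) = (\<Sum>s'\<in>UNIV. if s' = s then dist_t P \<pi>' t s s' * \<psi> else 0)"
      unfolding Dv_def by (rule sum.cong) auto
    also have "\<dots> = dist_t P \<pi>' t s s * \<psi>" by (subst sum.delta) auto
    finally show ?thesis .
  qed
  define F where "F = (\<lambda>t. \<gamma>^t * (dist_t P \<pi>' t s s * \<psi>))"
  have sF: "summable F"
    using Dv_summable[OF assms(1) pol' assms(3,4), of s "\<lambda>s'. if s' = s then \<psi> else 0"]
    unfolding F_def D .
  have F0: "F 0 = \<psi>" unfolding F_def by simp
  have FS: "F (Suc n) \<le> 0" for n
  proof -
    have d0: "0 \<le> dist_t P \<pi>' (Suc n) s s" using dist_nonneg_sum[OF assms(1) pol', of "Suc n" s] by blast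
    have "\<psi> \<le> 0" using True unfolding \<psi>_def .
    then show ?thesis unfolding F_def using d0 assms(3)
      by (intro mult_nonneg_nonpos zero_le_power)
  qed
  have "(\<Sum>n. F (Suc n)) \<le> (\<Sum>n. (0::real))"
    using FS sF by (intro suminf_le) (auto simp: summable_Suc_iff)
  then have "suminf F \<le> \<psi>" using suminf_split_head[OF sF] F0 by simp
  moreover have "Vf P c h \<gamma> \<pi>' s - Vf P c h \<gamma> \<pi> s = suminf F"
    unfolding perf_diff[OF assms(1-4) pol'] phi D F_def ..
  moreover have "Vf P c h \<gamma> \<pi>o s \<le> Vf P c h \<gamma> \<pi>' s" by (rule opt[OF pol'])
  ultimately show ?thesis unfolding \<psi>_def by linarith
qed

lemma simplex_ne: "(act_simplex :: ('a::finite \<Rightarrow> real) set) \<noteq> {}"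
proof -
  have "(\<lambda>a::'a. 1 / real CARD('a)) \<in> act_simplex"
    unfolding act_simplex_def by simp
  then show ?thesis by blast
qed

theorem proposition2p2:
  fixes P :: "'s::finite \<Rightarrow> 'a::finite \<Rightarrow> 's \<Rightarrow> real"
    and c :: "'s \<Rightarrow> 'a \<Rightarrow> real"
    and h :: "'s \<Rightarrow> ('a \<Rightarrow> real) \<Rightarrow> real"
    and \<gamma> :: real
    and \<pi> \<pi>_opt :: "'s \<Rightarrow> 'a \<Rightarrow> real"
  assumes "stochastic P"
    and "0 \<le> \<gamma>" and "\<gamma> < 1"
    and "\<And>s. closed_convex_on_simplex (h s)"
    and "policy \<pi>_opt"
    and "\<And>\<pi>' s. policy \<pi>' \<Longrightarrow> Vf P c h \<gamma> \<pi>_opt s \<le> Vf P c h \<gamma> \<pi>' s"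
    and "policy \<pi>"
  shows "adv_gap P c h \<gamma> \<pi> s \<le> Vf P c h \<gamma> \<pi> s - Vf P c h \<gamma> \<pi>_opt s
       \<and> Vf P c h \<gamma> \<pi> s - Vf P c h \<gamma> \<pi>_opt s \<le> (1 / (1 - \<gamma>)) * Max (range (adv_gap P c h \<gamma> \<pi>))"
proof
  note nl = neg_psi_le[OF assms(1,7,2,3), where \<pi>o = \<pi>_opt, OF assms(6)]
  show "adv_gap P c h \<gamma> \<pi> s \<le> Vf P c h \<gamma> \<pi> s - Vf P c h \<gamma> \<pi>_opt s"
    unfolding adv_gap_def by (rule cSUP_least[OF simplex_ne]) (rule nl)
  define M where "M = Max (range (adv_gap P c h \<gamma> \<pi>))"
  have gle: "- adv_psi P c h \<gamma> \<pi> s' (\<pi>_opt s') \<le> M" for s'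
  proof -
    have "- adv_psi P c h \<gamma> \<pi> s' (\<pi>_opt s') \<le> adv_gap P c h \<gamma> \<pi> s'"
      unfolding adv_gap_def
    proof (rule cSUP_upper)
      show "\<pi>_opt s' \<in> act_simplex" using assms(5) by (simp add: policy_def)
      show "bdd_above ((\<lambda>p. - adv_psi P c h \<gamma> \<pi> s' p) ` act_simplex)"
        using nl[of _ s'] by (intro bdd_aboveI2) 
    qed
    also have "\<dots> \<le> M" unfolding M_def by (rule Max_ge) auto
    finally show ?thesis .
  qed
  have gle': "- M \<le> adv_psi P c h \<gamma> \<pi> s' (\<pi>_opt s')" for s' using gle[of s'] by linarith
  have le: "\<gamma>^t * (- M) \<le> \<gamma>^t * Dv P \<pi>_opt t s (\<lambda>s'. adv_psi P c h \<gamma> \<pi> s' (\<pi>_opt s'))" for t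
  proof -
    have "- M = Dv P \<pi>_opt t s (\<lambda>_. - M)" by (rule Dv_const[OF assms(1,5), symmetric])
    also have "\<dots> \<le> Dv P \<pi>_opt t s (\<lambda>s'. adv_psi P c h \<gamma> \<pi> s' (\<pi>_opt s'))"
      by (rule Dv_mono[OF assms(1,5)], rule gle')
    finally show ?thesis using assms(2) by (intro mult_left_mono) auto
  qed
  have sg: "summable (\<lambda>t. \<gamma>^t * (- M))"
    using assms(2,3) by (intro summable_mult2 summable_geometric) simp
  have "(\<Sum>t. \<gamma>^t * (- M)) \<le> (\<Sum>t. \<gamma>^t * Dv P \<pi>_opt t s (\<lambda>s'. adv_psi P c h \<gamma> \<pi> s' (\<pi>_opt s')))"
    by (rule suminf_le[OF le sg Dv_summable[OF assms(1,5,2,3)]])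
  also have "\<dots> = Vf P c h \<gamma> \<pi>_opt s - Vf P c h \<gamma> \<pi> s"
    by (rule perf_diff[OF assms(1,7,2,3,5), symmetric])
  finally have "(\<Sum>t. \<gamma>^t * (- M)) \<le> Vf P c h \<gamma> \<pi>_opt s - Vf P c h \<gamma> \<pi> s" .
  moreover have "(\<Sum>t. \<gamma>^t * (- M)) = - M * (1 / (1 - \<gamma>))"
  proof -
    have gs: "summable (\<lambda>t. \<gamma>^t)" using assms(2,3) by (intro summable_geometric) simp
    have "(\<Sum>t. \<gamma>^t * (- M)) = (\<Sum>t. \<gamma>^t) * (- M)" by (rule suminf_mult2[OF gs, symmetric])
    also have "(\<Sum>t. \<gamma>^t) = 1 / (1 - \<gamma>)" using assms(2,3) by (intro suminf_geometric) simp
    finally show ?thesis by simp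
  qed
  ultimately show "Vf P c h \<gamma> \<pi> s - Vf P c h \<gamma> \<pi>_opt s \<le> (1 / (1 - \<gamma>)) * Max (range (adv_gap P c h \<gamma> \<pi>))"
    unfolding M_def[symmetric] by (simp add: algebra_simps)
qed

end
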